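(* Let $T$ be the Kari–Culik set of 13 Wang tiles described in the context. Then $T$ tiles the plane and has positive entropy, i.e. $H(T)=\lim_{n\to\infty}\frac{\log C_T(n)}{n^2}>0$, where $C_T(n)$ is the number of distinct $n\times n$ square patterns that occur in at least one tiling of the plane $\mathbb{Z}^2$ by $T$.
   Context: A Wang tile is a unit square with a color on each of its four sides; a tiling of the plane is an assignment of a tile to every cell of $\mathbb{Z}^2$ such that adjacent tiles have equal colors on their common side (no rotations). The limit defining $H(T)$ exists. The Kari–Culik tileset $T$ uses horizontal-edge (top/bottom) colors $0,0',1,2$ and vertical-edge (left/right) colors from two disjoint state sets $\{s_0,s_1\}$ and $\{r_0,r_{1/3},r_{2/3}\}$. Writing a tile as (left, bottom, top, right), the 13 tiles are: $(s_0,0,0',s_0)$, $(s_1,0,0',s_1)$, $(s_0,1,2,s_0)$, $(s_1,1,2,s_1)$, $(s_0,1,1,s_1)$, $(s_1,0,1,s_0)$, $(s_1,0',1,s_0)$, $(r_0,2,1,r_{1/3})$, $(r_{1/3},2,1,r_{2/3})$, $(r_{1/3},1,0,r_0)$, $(r_{2/3},1,0,r_{1/3})$, $(r_0,1,1,r_{2/3})$, $(r_{2/3},2,0,r_0)$. *)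

theory Defs
  imports Complex_Main
begin

datatype hcol = H0 | H0' | H1 | H2

text \<open>Vertical-edge colours (left/right): s0, s1 and r0, r1/3, r2/3.\<close>
datatype vcol = S0 | S1 | R0 | R13 | R23

text \<open>A Wang tile written as (left, bottom, top, right).\<close>
type_synonym tile = "vcol \<times> hcol \<times> hcol \<times> vcol"

definition tleft :: "tile \<Rightarrow> vcol" where "tleft t = (case t of (l, b, u, r) \<Rightarrow> l)"
definition tbottom :: "tile \<Rightarrow> hcol" where "tbottom t = (case t of (l, b, u, r) \<Rightarrow> b)"
definition ttop :: "tile \<Rightarrow> hcol" where "ttop t = (case t of (l, b, u, r) \<Rightarrow> u)"
definition tright :: "tile \<Rightarrow> vcol" where "tright t = (case t of (l, b, u, r) \<Rightarrow> r)"

definition KC :: "tile set" where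
  "KC = {(S0, H0, H0', S0), (S1, H0, H0', S1), (S0, H1, H2, S0), (S1, H1, H2, S1),
         (S0, H1, H1, S1), (S1, H0, H1, S0), (S1, H0', H1, S0),
         (R0, H2, H1, R13), (R13, H2, H1, R23), (R13, H1, H0, R0),
         (R23, H1, H0, R13), (R0, H1, H1, R23), (R23, H2, H0, R0)}"

text \<open>A tiling of the plane Z^2 by T: cell (i,j), i the column (x), j the row (y).
  Horizontal neighbours share a vertical edge, vertical neighbours share a horizontal edge.\<close>
definition is_tiling :: "tile set \<Rightarrow> (int \<times> int \<Rightarrow> tile) \<Rightarrow> bool" where
  "is_tiling T f \<longleftrightarrow>
     (\<forall>i j. f (i, j) \<in> T) \<and>
     (\<forall>i j. tright (f (i, j)) = tleft (f (i + 1, j))) \<and>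
     (\<forall>i j. ttop (f (i, j)) = tbottom (f (i, j + 1)))"

definition pattern_at :: "(int \<times> int \<Rightarrow> tile) \<Rightarrow> nat \<Rightarrow> int \<Rightarrow> int \<Rightarrow> (nat \<times> nat \<Rightarrow> tile option)" where
  "pattern_at f n a b = (\<lambda>(i, j). if i < n \<and> j < n then Some (f (a + int i, b + int j)) else None)"

definition pattern_count :: "tile set \<Rightarrow> nat \<Rightarrow> nat" where
  "pattern_count T n = card {p. \<exists>f a b. is_tiling T f \<and> p = pattern_at f n a b}"

end

theory Submission
  imports Defs "HOL-Library.FuncSet"
begin


definition alpha :: real where "alpha = ln 2 / ln 6"
definition phi :: "int \<Rightarrow> real" where "phi j = frac (of_int j * alpha)"
definition X :: "int \<Rightarrow> real" where "X j = 6 powr (phi j) / 3"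

lemma alpha_bounds: "0 < alpha" "alpha < 1"
  unfolding alpha_def by (auto simp: divide_less_eq)

lemma six_powr_alpha: "6 powr alpha = 2"
  unfolding alpha_def powr_def by simp

lemma phi_bounds: "0 \<le> phi j" "phi j < 1"
  unfolding phi_def by (auto simp: frac_lt_1)

lemma X_bounds: "1/3 \<le> X j" "X j < 2"
proof -
  have "6 powr 0 \<le> 6 powr (phi j)" using phi_bounds[of j] by (intro powr_mono) auto
  then show "1/3 \<le> X j" unfolding X_def by simp
  have "6 powr (phi j) < 6 powr 1" using phi_bounds[of j] by (intro powr_less_mono) auto
  then show "X j < 2" unfolding X_def by simp
qed

lemma phi_succ: "phi (j+1) = (if phi j + alpha < 1 then phi j + alpha else phi j + alpha - 1)"
proof -
  have "of_int (j+1) * alpha = of_int j * alpha + alpha" by (simp add: algebra_simps)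
  then have "phi (j+1) = frac (phi j + alpha)"
    unfolding phi_def by (simp add: frac_add)
  also have "\<dots> = (if phi j + alpha < 1 then phi j + alpha else phi j + alpha - 1)"
    using phi_bounds[of j] alpha_bounds by (auto simp: frac_add frac_eq)
  finally show ?thesis .
qed

lemma X_lt1_iff: "X j < 1 \<longleftrightarrow> phi j + alpha < 1"
proof -
  have "6 powr (phi j + alpha) = 2 * 6 powr phi j" by (simp add: powr_add six_powr_alpha)
  moreover have "(6 powr (phi j + alpha) < 6 powr 1) \<longleftrightarrow> phi j + alpha < 1"
    by (rule powr_less_cancel_iff) auto
  ultimately show ?thesis unfolding X_def by auto
qed

lemma X_succ: "X (j+1) = (if X j < 1 then 2 * X j else X j / 3)"
proof (cases "phi j + alpha < 1")
  case True
  then show ?thesis using X_lt1_iff[of j]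
    by (simp add: phi_succ X_def powr_add six_powr_alpha)
next
  case False
  have "6 powr (phi j + alpha - 1) = 6 powr phi j * 2 / 6"
    by (simp add: powr_add powr_diff six_powr_alpha)
  then show ?thesis using False X_lt1_iff[of j]
    by (simp add: phi_succ X_def)
qed



definition dig :: "real \<Rightarrow> int \<Rightarrow> int" where
  "dig x i = \<lfloor>of_int (i+1) * x\<rfloor> - \<lfloor>of_int i * x\<rfloor>"

lemma floor_add_le1: "\<lfloor>a + b\<rfloor> \<le> \<lfloor>a::real\<rfloor> + \<lfloor>b\<rfloor> + 1"
proof -
  have "a + b < of_int \<lfloor>a\<rfloor> + 1 + of_int \<lfloor>b\<rfloor> + 1" by linarith
  then show ?thesis by linarith
qed

lemma dig_bounds: "\<lfloor>x\<rfloor> \<le> dig x i" "dig x i \<le> \<lfloor>x\<rfloor> + 1"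
proof -
  have e: "of_int (i+1) * x = of_int i * x + x" by (simp add: algebra_simps)
  show "\<lfloor>x\<rfloor> \<le> dig x i" unfolding dig_def e using le_floor_add[of "of_int i * x" x] by linarith
  show "dig x i \<le> \<lfloor>x\<rfloor> + 1" unfolding dig_def e using floor_add_le1[of "of_int i * x" x]
    by linarith
qed
lemma floor_2x: "\<lfloor>2 * z\<rfloor> - 2 * \<lfloor>z::real\<rfloor> \<in> {0, 1}"
proof -
  have "2 * \<lfloor>z\<rfloor> \<le> \<lfloor>2 * z\<rfloor>" unfolding mult_2 by (rule le_floor_add)
  moreover have "\<lfloor>2 * z\<rfloor> \<le> 2 * \<lfloor>z\<rfloor> + 1" unfolding mult_2 by (rule floor_add_le1)
  ultimately show ?thesis by auto
qed
lemma floor_div3: "\<lfloor>z / 3\<rfloor> = \<lfloor>z::real\<rfloor> div 3"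
proof -
  define a where "a = \<lfloor>z\<rfloor>"
  have a: "of_int a \<le> z" "z < of_int a + 1" unfolding a_def by linarith+
  have d: "a = 3 * (a div 3) + a mod 3" by simp
  have r: "0 \<le> a mod 3" "a mod 3 < 3" by auto
  have i1: "3 * (a div 3) \<le> a" using d r by linarith
  have i2: "a + 1 \<le> 3 * (a div 3) + 3" using d r by linarith
  have "3 * real_of_int (a div 3) \<le> of_int a" using i1 by linarith
  moreover have "real_of_int a + 1 \<le> 3 * real_of_int (a div 3) + 3" using i2 by linarith
  ultimately have "of_int (a div 3) \<le> z / 3" "z / 3 < of_int (a div 3) + 1" using a by linarith+
  then show ?thesis unfolding a_def[symmetric] by (simp add: floor_eq_iff)
qed

definition hc :: "int \<Rightarrow> int \<Rightarrow> hcol" where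
  "hc j i = (if dig (X (j+1)) i = 0 then (if X j < 1 then H0' else H0)
             else if dig (X (j+1)) i = 1 then H1 else H2)"

definition vs :: "int \<Rightarrow> int \<Rightarrow> vcol" where
  "vs j i = (if X j < 1 then (if \<lfloor>of_int i * X (j+1)\<rfloor> = 2 * \<lfloor>of_int i * X j\<rfloor> then S1 else S0)
             else (if \<lfloor>of_int i * X j\<rfloor> mod 3 = 0 then R23
                   else if \<lfloor>of_int i * X j\<rfloor> mod 3 = 1 then R13 else R0))"

definition canon :: "int \<times> int \<Rightarrow> tile" where
  "canon p = (case p of (i, j) \<Rightarrow> (vs j i, hc (j-1) i, hc j i, vs j (i+1)))"

lemma s_tile:
  fixes dl dr d e :: int
  assumes "dl \<in> {0,1}" "dr \<in> {0,1}" "d \<in> {0,1}" "e = 2*d + dr - dl" "0 \<le> e" "e \<le> 2"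
    "P \<Longrightarrow> d = 0 \<Longrightarrow> 1 \<le> e"
  shows "(if dl = 0 then S1 else S0,
          (if d = 0 then (if P then H0' else H0) else if d = 1 then H1 else H2),
          (if e = 0 then H0' else if e = 1 then H1 else H2),
          (if dr = 0 then S1 else S0)) \<in> KC"
proof -
  have "dl = 0 \<or> dl = 1" "dr = 0 \<or> dr = 1" "d = 0 \<or> d = 1" using assms(1-3) by auto
  then show ?thesis using assms(4-7) unfolding KC_def
    by (cases P) (elim disjE; simp)+
qed
lemma r_tile:
  fixes wl wr d e :: int
  assumes "wl \<in> {0,1,2}" "wr \<in> {0,1,2}" "d \<in> {1,2}" "e \<in> {0,1}" "wr = wl + d - 3*e"
  shows "(if wl = 0 then R23 else if wl = 1 then R13 else R0,
          (if d = 0 then H0 else if d = 1 then H1 else H2),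
          (if e = 0 then H0 else if e = 1 then H1 else H2),
          (if wr = 0 then R23 else if wr = 1 then R13 else R0)) \<in> KC"
proof -
  have "wl = 0 \<or> wl = 1 \<or> wl = 2" "d = 1 \<or> d = 2" "e = 0 \<or> e = 1" using assms(1,3,4) by auto
  then show ?thesis using assms(2,5) unfolding KC_def
    by (elim disjE; simp)
qed

lemma canon_in: "canon (i, j) \<in> KC"
proof (cases "X j < 1")
  case True
  define x where "x = X j"
  have x: "1/3 \<le> x" "x < 1" using X_bounds[of j] True unfolding x_def by auto
  have X1: "X (j+1) = 2 * x" using X_succ[of j] True unfolding x_def by simp
  define dl where "dl = \<lfloor>of_int i * X (j+1)\<rfloor> - 2 * \<lfloor>of_int i * X j\<rfloor>"
  define dr where "dr = \<lfloor>of_int (i+1) * X (j+1)\<rfloor> - 2 * \<lfloor>of_int (i+1) * X j\<rfloor>"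
  define d where "d = dig (X j) i"
  define e where "e = dig (X (j+1)) i"
  have fx: "\<lfloor>x\<rfloor> = 0" using x by (simp add: floor_eq_iff)
  have f2x: "\<lfloor>2*x\<rfloor> \<in> {0, 1}" using x by (auto simp: floor_eq_iff) 
  have dl: "dl \<in> {0,1}" unfolding dl_def X1 x_def[symmetric] using floor_2x[of "of_int i * x"]
    by (simp add: algebra_simps)
  have dr: "dr \<in> {0,1}" unfolding dr_def X1 x_def[symmetric] using floor_2x[of "of_int (i+1) * x"]
    by (simp add: algebra_simps)
  have d: "d \<in> {0,1}" unfolding d_def x_def[symmetric] using dig_bounds[of x i] fx by auto
  have e02: "0 \<le> e" "e \<le> 2" unfolding e_def X1 using dig_bounds[of "2*x" i] f2x by auto
  have ede: "e = 2*d + dr - dl" unfolding e_def d_def dl_def dr_def dig_def by simp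
  have P: "1 \<le> e" if "X (j-1) < 1"
  proof -
    have "X j = 2 * X (j-1)" using X_succ[of "j-1"] that by simp
    then have "2/3 \<le> x" using X_bounds[of "j-1"] unfolding x_def by simp
    then have "\<lfloor>2*x\<rfloor> = 1" using x by (simp add: floor_eq_iff)
    then show ?thesis unfolding e_def X1 using dig_bounds[of "2*x" i] by auto
  qed
  have "canon (i,j) = (if dl = 0 then S1 else S0,
          (if d = 0 then (if X (j-1) < 1 then H0' else H0) else if d = 1 then H1 else H2),
          (if e = 0 then H0' else if e = 1 then H1 else H2),
          (if dr = 0 then S1 else S0))"
    unfolding canon_def vs_def hc_def dl_def dr_def d_def e_def using True by auto
  also have "\<dots> \<in> KC" by (rule s_tile[OF dl dr d ede e02]) (use P in auto)
  finally show ?thesis .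
next
  case False
  define x where "x = X j"
  have x: "1 \<le> x" "x < 2" using X_bounds[of j] False unfolding x_def by auto
  have X1: "X (j+1) = x / 3" using X_succ[of j] False unfolding x_def by simp
  define wl where "wl = \<lfloor>of_int i * x\<rfloor> mod 3"
  define wr where "wr = \<lfloor>of_int (i+1) * x\<rfloor> mod 3"
  define d where "d = dig x i"
  define e where "e = dig (x/3) i"
  have fx: "\<lfloor>x\<rfloor> = 1" using x by (simp add: floor_eq_iff)
  have f3: "\<lfloor>x/3\<rfloor> = 0" using x by (simp add: floor_eq_iff)
  have d: "d \<in> {1,2}" unfolding d_def using dig_bounds[of x i] fx by auto
  have e: "e \<in> {0,1}" unfolding e_def using dig_bounds[of "x/3" i] f3 by auto
  have wl: "wl \<in> {0,1,2}" unfolding wl_def by auto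
  have wr: "wr \<in> {0,1,2}" unfolding wr_def by auto
  have q: "\<lfloor>of_int k * (x/3)\<rfloor> = \<lfloor>of_int k * x\<rfloor> div 3" for k
    using floor_div3[of "of_int k * x"] by simp
  have ede: "wr = wl + d - 3*e"
  proof -
    have "e = \<lfloor>of_int (i+1) * x\<rfloor> div 3 - \<lfloor>of_int i * x\<rfloor> div 3" unfolding e_def dig_def q by simp
    moreover have "\<lfloor>of_int (i+1) * x\<rfloor> div 3 * 3 + \<lfloor>of_int (i+1) * x\<rfloor> mod 3 = \<lfloor>of_int (i+1) * x\<rfloor>"
      by (rule div_mult_mod_eq)
    moreover have "\<lfloor>of_int i * x\<rfloor> div 3 * 3 + \<lfloor>of_int i * x\<rfloor> mod 3 = \<lfloor>of_int i * x\<rfloor>"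
      by (rule div_mult_mod_eq)
    ultimately show ?thesis unfolding wl_def wr_def d_def dig_def by linarith
  qed
  have "canon (i,j) = (if wl = 0 then R23 else if wl = 1 then R13 else R0,
          (if d = 0 then H0 else if d = 1 then H1 else H2),
          (if e = 0 then H0 else if e = 1 then H1 else H2),
          (if wr = 0 then R23 else if wr = 1 then R13 else R0))"
    unfolding canon_def vs_def hc_def wl_def wr_def d_def e_def using False d
    using d_def[unfolded x_def] by (auto simp: X1 x_def)
  also have "\<dots> \<in> KC" by (rule r_tile[OF wl wr d e ede])
  finally show ?thesis .
qed

lemma canon_tiling: "is_tiling KC canon"
  unfolding is_tiling_def using canon_in by (auto simp: canon_def tleft_def tright_def ttop_def tbottom_def)



definition good_row :: "int \<Rightarrow> bool" where
  "good_row j \<longleftrightarrow> log 6 2.124 \<le> phi j \<and> phi j \<le> log 6 2.16"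

definition site :: "int \<times> int \<Rightarrow> bool" where
  "site p \<longleftrightarrow> (case p of (i, j) \<Rightarrow> good_row j \<and>
      0.601 \<le> frac (of_int i * (X j / 3)) \<and> frac (of_int i * (X j / 3)) \<le> 0.665)"

lemma good_row_X: assumes "good_row j" shows "0.708 \<le> X j" "X j \<le> 0.72"
proof -
  have "6 powr (log 6 2.124) \<le> 6 powr (phi j)" using assms unfolding good_row_def
    by (intro powr_mono) auto
  then show "0.708 \<le> X j" unfolding X_def by simp
  have "6 powr (phi j) \<le> 6 powr (log 6 2.16)" using assms unfolding good_row_def
    by (intro powr_mono) auto
  then show "X j \<le> 0.72" unfolding X_def by simp
qed

lemma site_canon:
  assumes "site (i, j)"
  shows "canon (i, j) = (S0, H1, H2, S0)" "canon (i+1, j) = (S0, H1, H1, S1)"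
        "canon (i, j+1) = (R23, H2, H0, R0)" "canon (i+1, j+1) = (R0, H1, H1, R23)"
proof -
  define x where "x = X j"
  have gr: "good_row j" using assms unfolding site_def by auto
  have x: "0.708 \<le> x" "x \<le> 0.72" using good_row_X[OF gr] unfolding x_def by auto
  define q where "q = \<lfloor>of_int i * (x/3)\<rfloor>"
  define t where "t = frac (of_int i * (x/3))"
  have t: "0.601 \<le> t" "t \<le> 0.665" using assms unfolding site_def t_def x_def by auto
  have iy: "of_int i * (x/3) = of_int q + t" unfolding q_def t_def frac_def by simp
  have ix: "of_int i * x = 3 * of_int q + 3 * t" using iy by (simp add: field_simps)
  have X1: "X (j+1) = 2 * x" using X_succ[of j] x unfolding x_def by simp
  have X2: "X (j+1+1) = 2 * x / 3" using X_succ[of "j+1"] X1 x by simp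
  have nl: "\<not> X (j+1) < 1" using X1 x by simp
  have xl: "X j < 1" using x unfolding x_def by simp
  have e0: "of_int i * x = 3 * of_int q + 3 * t" by (rule ix)
  have e1: "of_int (i+1) * x = 3 * of_int q + 3 * t + x" using ix by (simp add: distrib_right)
  have e2: "of_int (i+2) * x = 3 * of_int q + 3 * t + 2 * x" using ix by (simp add: distrib_right)
  have f0: "of_int i * (2*x) = 6 * of_int q + 6 * t" using ix by simp
  have f1: "of_int (i+1) * (2*x) = 6 * of_int q + 6 * t + 2 * x" using ix by (simp add: distrib_right)
  have f2: "of_int (i+2) * (2*x) = 6 * of_int q + 6 * t + 4 * x" using ix by (simp add: distrib_right)
  have g0: "of_int i * (2*x/3) = 2 * of_int q + 2 * t" using ix by simp
  have g1: "of_int (i+1) * (2*x/3) = 2 * of_int q + 2 * t + 2*x/3" using ix by (simp add: distrib_right)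
  have g2: "of_int (i+2) * (2*x/3) = 2 * of_int q + 2 * t + 4*x/3" using ix by (simp add: distrib_right)
  have a0: "\<lfloor>of_int i * x\<rfloor> = 3*q+1" unfolding e0 by (rule floor_unique) (use t x in \<open>simp; linarith\<close>)+
  have a1: "\<lfloor>of_int (i+1) * x\<rfloor> = 3*q+2" unfolding e1 by (rule floor_unique) (use t x in \<open>simp; linarith\<close>)+
  have a2: "\<lfloor>of_int (i+2) * x\<rfloor> = 3*q+3" unfolding e2 by (rule floor_unique) (use t x in \<open>simp; linarith\<close>)+
  have b0: "\<lfloor>of_int i * (2*x)\<rfloor> = 6*q+3" unfolding f0 by (rule floor_unique) (use t x in \<open>simp; linarith\<close>)+
  have b1: "\<lfloor>of_int (i+1) * (2*x)\<rfloor> = 6*q+5" unfolding f1 by (rule floor_unique) (use t x in \<open>simp; linarith\<close>)+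
  have b2: "\<lfloor>of_int (i+2) * (2*x)\<rfloor> = 6*q+6" unfolding f2 by (rule floor_unique) (use t x in \<open>simp; linarith\<close>)+
  have c0: "\<lfloor>of_int i * (2*x/3)\<rfloor> = 2*q+1" unfolding g0 by (rule floor_unique) (use t x in \<open>simp; linarith\<close>)+
  have c1: "\<lfloor>of_int (i+1) * (2*x/3)\<rfloor> = 2*q+1" unfolding g1 by (rule floor_unique) (use t x in \<open>simp; linarith\<close>)+
  have c2: "\<lfloor>of_int (i+2) * (2*x/3)\<rfloor> = 2*q+2" unfolding g2 by (rule floor_unique) (use t x in \<open>simp; linarith\<close>)+
  have m: "(6*q+3) mod 3 = 0" "(6*q+5) mod 3 = 2" "(6*q+6) mod 3 = 0" by presburger+
  have ii: "i + 1 + 1 = i + 2" by simp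
  have v0: "vs j i = S0" unfolding vs_def using xl X1 a0 b0 x_def by simp
  have v1: "vs j (i+1) = S0" unfolding vs_def using xl X1 a1 b1 x_def by simp
  have v2: "vs j (i+2) = S1" unfolding vs_def using xl X1 a2 b2 x_def by simp
  have w0: "vs (j+1) i = R23" unfolding vs_def using nl X1 b0 m by simp
  have w1: "vs (j+1) (i+1) = R0" unfolding vs_def using nl X1 b1 m by simp
  have w2: "vs (j+1) (i+2) = R23" unfolding vs_def using nl X1 b2 m by simp
  have d0: "dig x i = 1" unfolding dig_def using a0 a1 by simp
  have d1: "dig x (i+1) = 1" unfolding dig_def ii using a1 a2 by simp
  have h0: "dig (2*x) i = 2" unfolding dig_def using b0 b1 by simp
  have h1: "dig (2*x) (i+1) = 1" unfolding dig_def ii using b1 b2 by simp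
  have k0: "dig (2*x/3) i = 0" unfolding dig_def using c0 c1 by simp
  have k1: "dig (2*x/3) (i+1) = 1" unfolding dig_def ii using c1 c2 by simp
  have jj: "j - 1 + 1 = j" by simp
  have hh1: "hc (j-1) i = H1" "hc (j-1) (i+1) = H1" unfolding hc_def jj x_def[symmetric] using d0 d1 by simp_all
  have hh2: "hc j i = H2" "hc j (i+1) = H1" unfolding hc_def X1 using h0 h1 by simp_all
  have hh3: "hc (j+1) i = H0" "hc (j+1) (i+1) = H1" unfolding hc_def X2 using k0 k1 nl by simp_all
  note hh = hh1 hh2 hh3
  show "canon (i, j) = (S0, H1, H2, S0)"
    unfolding canon_def using v0 v1 hh by simp
  show "canon (i+1, j) = (S0, H1, H1, S1)"
    unfolding canon_def prod.case ii using v1 v2 hh by simp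
  show "canon (i, j+1) = (R23, H2, H0, R0)"
    unfolding canon_def using w0 w1 hh by simp
  show "canon (i+1, j+1) = (R0, H1, H1, R23)"
    unfolding canon_def prod.case ii using w1 w2 hh by simp
qed



definition flipt :: "(int \<times> int) set \<Rightarrow> int \<times> int \<Rightarrow> tile" where
  "flipt F p = (case p of (i, j) \<Rightarrow>
     if (i, j) \<in> F then (S0, H1, H1, S1)
     else if (i-1, j) \<in> F then (S1, H1, H2, S1)
     else if (i, j-1) \<in> F then (R23, H1, H0, R13)
     else if (i-1, j-1) \<in> F then (R13, H2, H1, R23)
     else canon (i, j))"

definition sep :: "(int \<times> int) set \<Rightarrow> bool" where
  "sep F \<longleftrightarrow> (\<forall>s\<in>F. \<forall>s'\<in>F. s \<noteq> s' \<longrightarrow> 2 \<le> \<bar>fst s - fst s'\<bar> \<or> 2 \<le> \<bar>snd s - snd s'\<bar>)"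

lemma site_canon': 
  assumes "site (i - 1, j)" shows "canon (i, j) = (S0, H1, H1, S1)"
  using site_canon(2)[OF assms] by simp
lemma site_canon'': 
  assumes "site (i, j - 1)" shows "canon (i, j) = (R23, H2, H0, R0)"
  using site_canon(3)[OF assms] by simp
lemma site_canon''': 
  assumes "site (i - 1, j - 1)" shows "canon (i, j) = (R0, H1, H1, R23)"
  using site_canon(4)[OF assms] by simp

context
  fixes F assumes S: "\<forall>s\<in>F. site s" and sp: "sep F"
begin

lemma sepD: "s \<in> F \<Longrightarrow> s' \<in> F \<Longrightarrow> \<bar>fst s - fst s'\<bar> \<le> 1 \<Longrightarrow> \<bar>snd s - snd s'\<bar> \<le> 1 \<Longrightarrow> s = s'"
  using sp unfolding sep_def by fastforce

lemma right_eq: "(i,j) \<notin> F \<Longrightarrow> (i,j-1) \<notin> F \<Longrightarrow> tright (flipt F (i,j)) = tright (canon (i,j))"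
  using S site_canon'[of i j] site_canon'''[of i j]
  by (auto simp: flipt_def tright_def)

lemma left_eq: "(i-1,j) \<notin> F \<Longrightarrow> (i-1,j-1) \<notin> F \<Longrightarrow> tleft (flipt F (i,j)) = tleft (canon (i,j))"
  using S site_canon(1)[of i j] site_canon''[of i j]
  by (auto simp: flipt_def tleft_def)

lemma top_eq: "(i,j) \<notin> F \<Longrightarrow> (i-1,j) \<notin> F \<Longrightarrow> ttop (flipt F (i,j)) = ttop (canon (i,j))"
  using S site_canon''[of i j] site_canon'''[of i j]
  by (auto simp: flipt_def ttop_def)

lemma bot_eq: "(i,j-1) \<notin> F \<Longrightarrow> (i-1,j-1) \<notin> F \<Longrightarrow> tbottom (flipt F (i,j)) = tbottom (canon (i,j))"
  using S site_canon(1)[of i j] site_canon'[of i j]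
  by (auto simp: flipt_def tbottom_def)

lemma flip_in: "flipt F p \<in> KC"
  using canon_in by (auto simp: flipt_def KC_def split: prod.splits)

lemma flip_h: "tright (flipt F (i, j)) = tleft (flipt F (i+1, j))"
proof -
  have ct: "tright (canon (i,j)) = tleft (canon (i+1,j))"
    using canon_tiling unfolding is_tiling_def by blast
  consider "(i,j) \<in> F" | "(i,j) \<notin> F" "(i,j-1) \<in> F" | "(i,j) \<notin> F" "(i,j-1) \<notin> F" by blast
  then show ?thesis
  proof cases
    case 1
    have "(i+1, j) \<notin> F" using sepD[OF 1, of "(i+1,j)"] by auto
    then show ?thesis using 1 by (simp add: flipt_def tright_def tleft_def)
  next
    case 2
    have a: "(i-1, j) \<notin> F" using sepD[OF 2(2), of "(i-1,j)"] by auto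
    have b: "(i+1, j) \<notin> F" using sepD[OF 2(2), of "(i+1,j)"] by auto
    have c: "(i+1, j-1) \<notin> F" using sepD[OF 2(2), of "(i+1,j-1)"] by auto
    show ?thesis using 2 a b c by (simp add: flipt_def tright_def tleft_def)
  next
    case 3
    then show ?thesis using right_eq[OF 3] left_eq[of "i+1" j] ct by simp
  qed
qed

lemma flip_v: "ttop (flipt F (i, j)) = tbottom (flipt F (i, j+1))"
proof -
  have ct: "ttop (canon (i,j)) = tbottom (canon (i,j+1))"
    using canon_tiling unfolding is_tiling_def by blast
  consider "(i,j) \<in> F" | "(i,j) \<notin> F" "(i-1,j) \<in> F" | "(i,j) \<notin> F" "(i-1,j) \<notin> F" by blast
  then show ?thesis
  proof cases
    case 1
    have a: "(i, j+1) \<notin> F" using sepD[OF 1, of "(i,j+1)"] by auto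
    have b: "(i-1, j+1) \<notin> F" using sepD[OF 1, of "(i-1,j+1)"] by auto
    show ?thesis using 1 a b by (simp add: flipt_def ttop_def tbottom_def)
  next
    case 2
    have a: "(i, j+1) \<notin> F" using sepD[OF 2(2), of "(i,j+1)"] by auto
    have b: "(i-1, j+1) \<notin> F" using sepD[OF 2(2), of "(i-1,j+1)"] by auto
    show ?thesis using 2 a b by (simp add: flipt_def ttop_def tbottom_def)
  next
    case 3
    then show ?thesis using top_eq[OF 3] bot_eq[of i "j+1"] ct by simp
  qed
qed

lemma flip_tiling: "is_tiling KC (flipt F)"
  unfolding is_tiling_def using flip_in flip_h flip_v by blast

end



lemma rot_pos:
  fixes b phi p q :: real
  assumes "0 < b" "b \<le> q - p" "q - p \<le> 1"
  shows "\<exists>t::nat. real t \<le> 2/b + 1 \<and> (\<exists>z::int. p \<le> phi + t*b - z \<and> phi + t*b - z \<le> q)"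
proof -
  define z0 where "z0 = \<lceil>phi - q\<rceil>"
  define ph where "ph = phi - of_int z0"
  have ph: "ph \<le> q" "q - 1 < ph" unfolding ph_def z0_def by linarith+
  show ?thesis
  proof (cases "p \<le> ph")
    case True
    then show ?thesis using ph assms by (intro exI[of _ 0]) (auto intro!: exI[of _ z0] simp: ph_def)
  next
    case False
    define r where "r = (p - ph) / b"
    have r0: "0 < r" unfolding r_def using False assms by auto
    define t where "t = nat \<lceil>r\<rceil>"
    have t1: "r \<le> real t" "real t < r + 1" unfolding t_def using r0 by linarith+
    have "r * b = p - ph" unfolding r_def using assms by simp
    moreover have "r * b \<le> real t * b" using t1 assms by (intro mult_right_mono) auto
    moreover have "real t * b \<le> (r + 1) * b" using t1 assms by (intro mult_right_mono) auto
    ultimately have tb: "p - ph \<le> real t * b" "real t * b \<le> p - ph + b" by (auto simp: algebra_simps)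
    have "r \<le> 1 / b" unfolding r_def using assms ph False by (intro divide_right_mono) auto
    moreover have "1 / b \<le> 2 / b" using assms by (simp add: divide_right_mono)
    ultimately have "real t \<le> 2/b + 1" using t1 by linarith
    then show ?thesis using tb assms by (intro exI[of _ t]) (auto intro!: exI[of _ z0] simp: ph_def)
  qed
qed

lemma rot:
  fixes b phi p q :: real
  assumes "b \<noteq> 0" "\<bar>b\<bar> \<le> q - p" "q - p \<le> 1"
  shows "\<exists>t::nat. real t \<le> 2/\<bar>b\<bar> + 1 \<and> (\<exists>z::int. p \<le> phi + t*b - z \<and> phi + t*b - z \<le> q)"
proof (cases "0 < b")
  case True
  then show ?thesis using rot_pos[of b q p phi] assms by auto
next
  case False
  then have b: "0 < -b" using assms by auto
  obtain t :: nat and z :: int where t: "real t \<le> 2/(-b) + 1" "-q \<le> -phi + t*(-b) - z" "-phi + t*(-b) - z \<le> -p"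
    using rot_pos[OF b, of "-p" "-q" "-phi"] assms False by auto
  show ?thesis using t False by (intro exI[of _ t]) (auto intro!: exI[of _ "-z"])
qed

lemma frac_eqI: "of_int z \<le> x \<Longrightarrow> x < of_int z + 1 \<Longrightarrow> frac (x::real) = x - of_int z"
  unfolding frac_def using floor_unique by metis

definition beta :: real where "beta = 31 * alpha - 12"

lemma ln6pos: "0 < ln (6::real)" by simp

lemma beta_neg: "beta < 0"
proof -
  have "ln (2147483648::real) < ln 2176782336" by simp
  moreover have "ln (2147483648::real) = 31 * ln 2" using ln_realpow[of 2 31] by simp
  moreover have "ln (2176782336::real) = 12 * ln 6" using ln_realpow[of 6 12] by simp
  ultimately have "31 * ln 2 < 12 * ln (6::real)" by linarith
  then show ?thesis unfolding beta_def alpha_def using ln6pos by (simp add: field_simps)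
qed

lemma beta_small: "\<bar>beta\<bar> \<le> log 6 2.16 - log 6 2.124"
proof -
  have "ln ((2176782336::real) * 2.124) \<le> ln (2147483648 * 2.16)" by simp
  moreover have "ln ((2176782336::real) * 2.124) = ln 2176782336 + ln 2.124"
    by (rule ln_mult_pos) auto
  moreover have "ln ((2147483648::real) * 2.16) = ln 2147483648 + ln 2.16"
    by (rule ln_mult_pos) auto
  moreover have "ln (2147483648::real) = 31 * ln 2" using ln_realpow[of 2 31] by simp
  moreover have "ln (2176782336::real) = 12 * ln 6" using ln_realpow[of 6 12] by simp
  ultimately have "12 * ln 6 + ln 2.124 \<le> 31 * ln 2 + ln (2.16::real)" by linarith
  then have "12 * ln 6 - 31 * ln 2 \<le> ln 2.16 - ln (2.124::real)" by simp
  then have "(12 * ln 6 - 31 * ln 2) / ln 6 \<le> (ln 2.16 - ln (2.124::real)) / ln 6"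
    using ln6pos by (intro divide_right_mono) auto
  then show ?thesis using beta_neg unfolding beta_def alpha_def log_def using ln6pos
    by (simp add: field_simps)
qed

lemma log_bounds: "0 \<le> log 6 (2.124::real)" "log 6 (2.16::real) < 1"
  by auto

lemma row_gap: "\<exists>RG::nat. \<forall>j0. \<exists>j. j0 \<le> j \<and> j \<le> j0 + int RG \<and> good_row j"
proof -
  define P where "P = log 6 (2.124::real)"
  define Q where "Q = log 6 (2.16::real)"
  have PQ: "0 \<le> P" "Q < 1" "\<bar>beta\<bar> \<le> Q - P" "Q - P \<le> 1"
    using log_bounds beta_small unfolding P_def Q_def by linarith+
  have gr: "good_row j \<longleftrightarrow> P \<le> phi j \<and> phi j \<le> Q" for j unfolding good_row_def P_def Q_def ..
  define N where "N = nat \<lceil>2 / \<bar>beta\<bar> + 1\<rceil>"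
  have "\<exists>j. j0 \<le> j \<and> j \<le> j0 + int (31 * N) \<and> good_row j" for j0
  proof -
    obtain t :: nat and z :: int where t: "real t \<le> 2/\<bar>beta\<bar> + 1"
      "P \<le> of_int j0 * alpha + t*beta - z" "of_int j0 * alpha + t*beta - z \<le> Q"
      using rot[where b=beta and p=P and q=Q and phi="of_int j0 * alpha", OF _ PQ(3,4)] beta_neg by force
    define j where "j = j0 + 31 * int t"
    have e: "of_int j * alpha = of_int j0 * alpha + t * beta + 12 * t"
      unfolding j_def beta_def by (simp add: algebra_simps)
    have "phi j = of_int j0 * alpha + t*beta - z" 
      unfolding phi_def e
      by (subst frac_eqI[of "z + 12 * int t"]) (use t PQ in auto)
    then have "good_row j" unfolding gr using t by auto
    moreover have "t \<le> N" unfolding N_def using t(1) by linarith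
    ultimately show ?thesis using j_def by (intro exI[of _ j]) auto
  qed
  then show ?thesis by blast
qed

lemma col_gap: assumes "good_row j" shows "\<exists>i. i0 \<le> i \<and> i \<le> i0 + 204 \<and> site (i, j)"
proof -
  define y where "y = X j / 3"
  have y: "0.236 \<le> y" "y \<le> 0.24" using good_row_X[OF assms] unfolding y_def by auto
  define b where "b = 4 * y - 1"
  have b: "b < 0" "\<bar>b\<bar> \<le> 0.665 - 0.601" "0.04 \<le> \<bar>b\<bar>" using y unfolding b_def by auto
  obtain t :: nat and z :: int where t: "real t \<le> 2/\<bar>b\<bar> + 1"
      "0.601 \<le> of_int i0 * y + t*b - z" "of_int i0 * y + t*b - z \<le> 0.665"
    using rot[where b=b and p="0.601" and q="0.665" and phi="of_int i0 * y", OF _ b(2)] b(1) by force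
  have "2/\<bar>b\<bar> \<le> 2 / 0.04" using b by (intro divide_left_mono) auto
  then have "real t \<le> real 51" using t(1) by simp
  then have tb: "t \<le> 51" using of_nat_le_iff by blast
  define i where "i = i0 + 4 * int t"
  have e: "of_int i * y = of_int i0 * y + t * b + t"
    unfolding i_def b_def by (simp add: algebra_simps)
  have "frac (of_int i * y) = of_int i0 * y + t*b - z"
    unfolding e by (subst frac_eqI[of "z + int t"]) (use t in auto)
  then have "site (i, j)" unfolding site_def using t assms y_def by auto
  then show ?thesis using tb i_def by (intro exI[of _ i]) auto
qed



definition PS :: "nat \<Rightarrow> (nat \<times> nat \<Rightarrow> tile option) set" where
  "PS n = {p. \<exists>f a b. is_tiling KC f \<and> p = pattern_at f n a b}"

lemma pc_PS: "pattern_count KC n = card (PS n)"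
  unfolding pattern_count_def PS_def ..

lemma finite_KC: "finite KC" unfolding KC_def by simp

lemma finite_PS: "finite (PS n)"
proof -
  have "PS n \<subseteq> {p. \<forall>x. (x \<in> {..<n} \<times> {..<n} \<longrightarrow> p x \<in> insert None (Some ` KC)) \<and>
                        (x \<notin> {..<n} \<times> {..<n} \<longrightarrow> p x = None)}"
    unfolding PS_def pattern_at_def is_tiling_def by auto
  moreover have "finite {p. \<forall>x. (x \<in> {..<n} \<times> {..<n} \<longrightarrow> p x \<in> insert None (Some ` KC)) \<and>
                        (x \<notin> {..<n} \<times> {..<n} \<longrightarrow> p x = None)}"
    by (rule finite_set_of_finite_funs) (auto simp: finite_KC)
  ultimately show ?thesis by (rule finite_subset)
qed

lemma PS_ne: "PS n \<noteq> {}"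
  unfolding PS_def using canon_tiling by blast

lemma card_PS_pos: "1 \<le> card (PS n)"
  using finite_PS PS_ne by (simp add: Suc_le_eq card_gt_0_iff)

lemma good_no_adj: "good_row j \<Longrightarrow> \<not> good_row (j+1)"
proof
  assume a: "good_row j" "good_row (j+1)"
  have "X j < 1" using good_row_X[OF a(1)] by simp
  then have "X (j+1) = 2 * X j" using X_succ by simp
  then show False using good_row_X[OF a(1)] good_row_X[OF a(2)] by simp
qed

lemma site_no_adj: "site (i, j) \<Longrightarrow> \<not> site (i+1, j)"
proof
  assume a: "site (i, j)" "site (i+1, j)"
  define y where "y = X j / 3"
  have y: "0.236 \<le> y" "y \<le> 0.24" using good_row_X a(1) unfolding y_def site_def by auto
  have f: "0.601 \<le> frac (of_int i * y)" "frac (of_int i * y) \<le> 0.665"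
    using a(1) unfolding site_def y_def by auto
  have fy: "frac y = y" using y by (simp add: frac_eq)
  have "frac (of_int (i+1) * y) = frac (of_int i * y + y)" by (simp add: algebra_simps)
  also have "\<dots> = frac (of_int i * y) + y" using f y fy by (subst frac_add) auto
  finally show False using a(2) f y unfolding site_def y_def by auto
qed

lemma sep_sites: assumes "\<forall>s\<in>F. site s" shows "sep F"
  unfolding sep_def
proof (intro ballI impI)
  fix s s' assume s: "s \<in> F" "s' \<in> F" "s \<noteq> s'"
  obtain i j i' j' where e: "s = (i,j)" "s' = (i',j')" by force
  have ss: "site (i,j)" "site (i',j')" using s assms e by auto
  show "2 \<le> \<bar>fst s - fst s'\<bar> \<or> 2 \<le> \<bar>snd s - snd s'\<bar>"
  proof (rule ccontr)
    assume "\<not> ?thesis"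
    then have d: "\<bar>i - i'\<bar> \<le> 1" "\<bar>j - j'\<bar> \<le> 1" using e by auto
    have g: "good_row j" "good_row j'" using ss unfolding site_def by auto
    have "j = j'"
    proof (rule ccontr)
      assume "j \<noteq> j'"
      then have "j' = j + 1 \<or> j = j' + 1" using d by auto
      then show False using good_no_adj g by auto
    qed
    moreover have "i \<noteq> i'" using s e \<open>j = j'\<close> by auto
    ultimately have "i' = i + 1 \<or> i = i' + 1" using d by auto
    then show False using site_no_adj ss \<open>j = j'\<close> by auto
  qed
qed

definition W :: "nat \<Rightarrow> (int \<times> int) set" where
  "W n = {(i,j). 0 \<le> i \<and> i + 2 \<le> int n \<and> 0 \<le> j \<and> j + 2 \<le> int n \<and> site (i,j)}"

lemma finite_W: "finite (W n)"
proof -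
  have "W n \<subseteq> {0..int n} \<times> {0..int n}" unfolding W_def by auto
  then show ?thesis by (rule finite_subset) auto
qed

lemma flipt_other:
  assumes "\<forall>s\<in>F. site s" "site (i,j)" "(i,j) \<notin> F"
  shows "flipt F (i,j) = canon (i,j)"
proof -
  have "(i-1,j) \<notin> F" using assms site_no_adj[of "i-1" j] by auto
  moreover have "(i,j-1) \<notin> F" using assms good_no_adj[of "j-1"] unfolding site_def by auto
  moreover have "(i-1,j-1) \<notin> F" using assms good_no_adj[of "j-1"] unfolding site_def by auto
  ultimately show ?thesis using assms(3) unfolding flipt_def by simp
qed

lemma count_lower: "2 ^ card (W n) \<le> card (PS n)"
proof -
  define m where "m F = pattern_at (flipt F) n 0 0" for F
  have sW: "\<forall>s\<in>F. site s" if "F \<subseteq> W n" for F using that unfolding W_def by auto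
  have sub: "F \<subseteq> F'" if "F \<subseteq> W n" "F' \<subseteq> W n" "m F = m F'" for F F'
  proof
    fix s assume s: "s \<in> F"
    obtain i j where e: "s = (i,j)" by force
    have w: "0 \<le> i" "i + 2 \<le> int n" "0 \<le> j" "j + 2 \<le> int n" "site (i,j)"
      using that(1) s e unfolding W_def by auto
    have "m F (nat i, nat j) = Some (flipt F (i,j))" unfolding m_def pattern_at_def using w by auto
    moreover have "m F' (nat i, nat j) = Some (flipt F' (i,j))" unfolding m_def pattern_at_def using w by auto
    ultimately have eq: "flipt F (i,j) = flipt F' (i,j)" using that(3) by simp
    have fF: "flipt F (i,j) = (S0, H1, H1, S1)" using s e unfolding flipt_def by simp
    show "s \<in> F'"
    proof (rule ccontr)
      assume "s \<notin> F'"
      then have "flipt F' (i,j) = canon (i,j)" using flipt_other[OF sW[OF that(2)] w(5)] e by simp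
      then show False using eq fF site_canon(1)[OF w(5)] by simp
    qed
  qed
  have inj: "inj_on m (Pow (W n))"
  proof (rule inj_onI)
    fix F F' assume a: "F \<in> Pow (W n)" "F' \<in> Pow (W n)" "m F = m F'"
    have "F \<subseteq> F'" using sub[of F F'] a by simp
    moreover have "F' \<subseteq> F" using sub[of F' F] a by simp
    ultimately show "F = F'" by (rule subset_antisym)
  qed
  have img: "m ` Pow (W n) \<subseteq> PS n"
  proof
    fix p assume "p \<in> m ` Pow (W n)"
    then obtain F where F: "F \<subseteq> W n" "p = m F" by auto
    have "is_tiling KC (flipt F)" by (rule flip_tiling[OF sW[OF F(1)] sep_sites[OF sW[OF F(1)]]])
    then show "p \<in> PS n" unfolding PS_def m_def F(2) by (intro CollectI exI conjI) (assumption, rule refl)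
  qed
  have "card (Pow (W n)) \<le> card (PS n)" by (rule card_inj_on_le[OF inj img finite_PS])
  then show ?thesis using finite_W by (simp add: card_Pow)
qed



lemma block_unique:
  fixes b b' :: nat and j :: int and R :: nat
  assumes "int (b*R) \<le> j" "j < int (b*R) + int R" "int (b'*R) \<le> j" "j < int (b'*R) + int R"
  shows "b = b'"
proof (rule ccontr)
  assume "b \<noteq> b'"
  then consider "b + 1 \<le> b'" | "b' + 1 \<le> b" by linarith
  then show False
  proof cases
    case 1
    then have "(b+1)*R \<le> b'*R" by (rule mult_right_mono) simp
    then have "int ((b+1)*R) \<le> int (b'*R)" by (simp only: of_nat_le_iff)
    moreover have "int ((b+1)*R) = int (b*R) + int R" by (simp add: algebra_simps)
    ultimately show False using assms by linarith
  next
    case 2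
    then have "(b'+1)*R \<le> b*R" by (rule mult_right_mono) simp
    then have "int ((b'+1)*R) \<le> int (b*R)" by (simp only: of_nat_le_iff)
    moreover have "int ((b'+1)*R) = int (b'*R) + int R" by (simp add: algebra_simps)
    ultimately show False using assms by linarith
  qed
qed

lemma div_bound: fixes c R n :: nat assumes "c < (n - 1) div R" shows "(c+1)*R + 1 \<le> n"
proof -
  have "(c+1) * R \<le> ((n-1) div R) * R" using assms by (intro mult_right_mono) auto
  also have "\<dots> \<le> n - 1" by simp
  finally have "(c+1)*R \<le> n - 1" .
  moreover have "n \<ge> 1" using assms by (cases n) auto
  ultimately show ?thesis by linarith
qed

lemma W_lower:
  obtains R1 :: nat where "R1 > 0" "\<And>n. ((n-1) div R1) * ((n-1) div 205) \<le> card (W n)"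
proof -
  obtain RG :: nat where RG: "\<forall>j0. \<exists>j. j0 \<le> j \<and> j \<le> j0 + int RG \<and> good_row j"
    using row_gap by blast
  define R1 where "R1 = RG + 1"
  have "((n-1) div R1) * ((n-1) div 205) \<le> card (W n)" for n
  proof -
    define Br where "Br = (n-1) div R1"
    define Bc where "Bc = (n-1) div 205"
    define rj where "rj b = (SOME j. int (b*R1) \<le> j \<and> j \<le> int (b*R1) + int RG \<and> good_row j)" for b
    have rj: "int (b*R1) \<le> rj b \<and> rj b \<le> int (b*R1) + int RG \<and> good_row (rj b)" for b
      unfolding rj_def by (rule someI_ex) (use RG in blast)
    define ci where "ci b c = (SOME i. int (c*205) \<le> i \<and> i \<le> int (c*205) + 204 \<and> site (i, rj b))" for b c
    have ci: "int (c*205) \<le> ci b c \<and> ci b c \<le> int (c*205) + 204 \<and> site (ci b c, rj b)" for b c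
      unfolding ci_def by (rule someI_ex) (use col_gap[OF conjunct2[OF conjunct2[OF rj[of b]]]] in blast)
    define g where "g p = (case p of (b, c) \<Rightarrow> (ci b c, rj b))" for p
    have inj: "inj_on g ({..<Br} \<times> {..<Bc})"
    proof (rule inj_onI)
      fix p p' assume "p \<in> {..<Br} \<times> {..<Bc}" "p' \<in> {..<Br} \<times> {..<Bc}" "g p = g p'"
      obtain b c b' c' where e: "p = (b,c)" "p' = (b',c')" by force
      have e1: "rj b = rj b'" "ci b c = ci b' c'" using \<open>g p = g p'\<close> e unfolding g_def by auto
      have "b = b'" by (rule block_unique[of b R1 "rj b" b']) (use rj[of b] rj[of b'] e1 R1_def in auto)
      moreover have "c = c'" by (rule block_unique[of c 205 "ci b c" c']) (use ci[of c b] ci[of c' b'] e1 in auto)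
      ultimately show "p = p'" using e by simp
    qed
    have img: "g ` ({..<Br} \<times> {..<Bc}) \<subseteq> W n"
    proof
      fix s assume "s \<in> g ` ({..<Br} \<times> {..<Bc})"
      then obtain b c where bc: "b < Br" "c < Bc" "s = (ci b c, rj b)" unfolding g_def by auto
      have n1: "(b+1)*R1 + 1 \<le> n" using div_bound bc(1) unfolding Br_def by blast
      have n2: "(c+1)*205 + 1 \<le> n" using div_bound bc(2) unfolding Bc_def by blast
      have n1': "int ((b+1)*R1) + 1 \<le> int n" using n1 by linarith
      have n2': "int ((c+1)*205) + 1 \<le> int n" using n2 by linarith
      have "int ((b+1)*R1) = int (b*R1) + int RG + 1" unfolding R1_def by (simp add: algebra_simps)
      moreover have "int ((c+1)*205) = int (c*205) + 205" by (simp add: algebra_simps)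
      moreover have z: "0 \<le> int (b*R1)" "0 \<le> int (c*205)" by simp_all
      ultimately have "0 \<le> rj b" "rj b + 2 \<le> int n" "0 \<le> ci b c" "ci b c + 2 \<le> int n"
        using rj[of b] ci[of c b] n1' n2' by linarith+
      then show "s \<in> W n" unfolding W_def using bc(3) ci[of c b] by simp
    qed
    have "card ({..<Br} \<times> {..<Bc}) \<le> card (W n)"
      by (rule card_inj_on_le[OF inj img finite_W])
    then show ?thesis unfolding Br_def Bc_def by (simp add: card_cartesian_product)
  qed
  then show ?thesis using that[of R1] unfolding R1_def by auto
qed



lemma k_bound: fixes n m :: nat assumes "0 < m" shows "n \<le> ((n + m - 1) div m) * m"
proof -
  have "n + m - 1 < m + ((n + m - 1) div m) * m" using dividend_less_div_times[OF assms] by blast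
  then show ?thesis by linarith
qed

lemma count_upper:
  fixes n m :: nat assumes m: "0 < m"
  shows "card (PS n) \<le> card (PS m) ^ (((n + m - 1) div m) * ((n + m - 1) div m))"
proof -
  define k where "k = (n + m - 1) div m"
  have kn: "n \<le> k * m" unfolding k_def by (rule k_bound[OF m])
  define A where "A = {..<k} \<times> {..<k}"
  define sel where "sel p = (SOME t. is_tiling KC (fst t) \<and> p = pattern_at (fst t) n (fst (snd t)) (snd (snd t)))" for p
  have sel: "is_tiling KC (fst (sel p)) \<and> p = pattern_at (fst (sel p)) n (fst (snd (sel p))) (snd (snd (sel p)))"
    if pin: "p \<in> PS n" for p
  proof -
    obtain f a b where "is_tiling KC f" "p = pattern_at f n a b" using pin unfolding PS_def by blast
    then have "is_tiling KC (fst (f,a,b)) \<and> p = pattern_at (fst (f,a,b)) n (fst (snd (f,a,b))) (snd (snd (f,a,b)))"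
      by simp
    then show ?thesis unfolding sel_def by (rule someI)
  qed
  define E where "E p = restrict (\<lambda>(u,v). pattern_at (fst (sel p)) m (fst (snd (sel p)) + int (u*m)) (snd (snd (sel p)) + int (v*m))) A" for p
  define D where "D h = (\<lambda>(i,j). if i < n \<and> j < n then h (i div m, j div m) (i mod m, j mod m) else None)" for h :: "nat \<times> nat \<Rightarrow> nat \<times> nat \<Rightarrow> tile option"
  have DE: "D (E p) = p" if "p \<in> PS n" for p
  proof
    fix x :: "nat \<times> nat"
    obtain i j where x: "x = (i, j)" by force
    obtain f a b where fab: "sel p = (f, a, b)" by (cases "sel p") auto
    have p: "p = pattern_at f n a b" using sel[OF that] fab by simp
    show "D (E p) x = p x"
    proof (cases "i < n \<and> j < n")
      case True
      have "i div m < k" using True kn m by (simp add: div_less_iff_less_mult)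
      moreover have "j div m < k" using True kn m by (simp add: div_less_iff_less_mult)
      ultimately have inA: "(i div m, j div m) \<in> A" unfolding A_def by simp
      have ei: "a + int (i div m * m) + int (i mod m) = a + int i"
        by (metis add.assoc div_mult_mod_eq of_nat_add)
      have ej: "b + int (j div m * m) + int (j mod m) = b + int j"
        by (metis add.assoc div_mult_mod_eq of_nat_add)
      have "D (E p) x = Some (f (a + int (i div m * m) + int (i mod m), b + int (j div m * m) + int (j mod m)))"
        unfolding D_def E_def x using True inA fab m by (simp add: pattern_at_def)
      also have "\<dots> = p x" unfolding ei ej p x pattern_at_def using True by simp
      finally show ?thesis .
    next
      case False
      then show ?thesis unfolding D_def x p pattern_at_def by auto
    qed
  qed
  have inj: "inj_on E (PS n)"
    by (rule inj_on_inverseI[where g = D]) (rule DE)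
  have img: "E ` PS n \<subseteq> PiE A (\<lambda>_. PS m)"
  proof
    fix h assume "h \<in> E ` PS n"
    then obtain p where p: "p \<in> PS n" "h = E p" by auto
    have "pattern_at (fst (sel p)) m c d \<in> PS m" for c d
      unfolding PS_def using sel[OF p(1)] by blast
    then show "h \<in> PiE A (\<lambda>_. PS m)" unfolding p(2) E_def by (auto simp: restrict_PiE_iff)
  qed
  have fA: "finite A" unfolding A_def by simp
  have "card (PS n) \<le> card (PiE A (\<lambda>_. PS m))"
    by (rule card_inj_on_le[OF inj img]) (rule finite_PiE[OF fA finite_PS])
  also have "\<dots> = card (PS m) ^ (k * k)" using fA by (simp add: card_PiE A_def card_cartesian_product)
  finally show ?thesis unfolding k_def .
qed



definition aa :: "nat \<Rightarrow> real" where
  "aa n = ln (real (pattern_count KC n)) / (real n)^2"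

lemma aa_nonneg: "0 \<le> aa n"
  unfolding aa_def pc_PS using card_PS_pos[of n] by simp

lemma ln_card_nonneg: "0 \<le> ln (real (card (PS n)))"
  using card_PS_pos[of n] by simp

lemma aa_upper:
  assumes m: "0 < m" and n: "0 < n"
  shows "aa n \<le> (1 + real m / real n)^2 * aa m"
proof -
  define k where "k = (n + m - 1) div m"
  have c: "card (PS n) \<le> card (PS m) ^ (k*k)" unfolding k_def by (rule count_upper[OF m])
  have km: "k * m \<le> n + m" unfolding k_def by (metis div_times_less_eq_dividend le_diff_conv le_add1 order_trans)
  have kr: "real k * real m \<le> real n + real m" using km by (metis of_nat_add of_nat_le_iff of_nat_mult)
  have lm: "0 \<le> ln (real (card (PS m)))" by (rule ln_card_nonneg)
  have "ln (real (card (PS n))) \<le> ln (real (card (PS m) ^ (k*k)))"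
    using c card_PS_pos[of n] card_PS_pos[of m] by (subst ln_le_cancel_iff) auto
  also have "\<dots> = real (k*k) * ln (real (card (PS m)))" by (simp add: ln_realpow)
  finally have l1: "ln (real (card (PS n))) \<le> (real k)^2 * ln (real (card (PS m)))"
    by (simp add: power2_eq_square)
  have "(real k * real m)^2 \<le> (real n + real m)^2" using kr by (intro power_mono) auto
  then have "(real k)^2 * (real m)^2 \<le> (real n + real m)^2" by (simp add: power_mult_distrib)
  then have "(real k)^2 \<le> (real n + real m)^2 / (real m)^2" using m by (simp add: field_simps)
  then have "(real k)^2 * ln (real (card (PS m))) \<le> ((real n + real m)^2 / (real m)^2) * ln (real (card (PS m)))"
    using lm by (intro mult_right_mono) auto
  with l1 have "ln (real (card (PS n))) \<le> ((real n + real m)^2 / (real m)^2) * ln (real (card (PS m)))" by linarith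
  then have "ln (real (card (PS n))) / (real n)^2 \<le> ((real n + real m)^2 / (real m)^2) * ln (real (card (PS m))) / (real n)^2"
    using n by (intro divide_right_mono) auto
  also have "\<dots> = (1 + real m / real n)^2 * (ln (real (card (PS m))) / (real m)^2)"
    using n m by (simp add: field_simps power2_eq_square)
  finally show ?thesis unfolding aa_def pc_PS .
qed

lemma div_real_lower: fixes n R :: nat assumes "0 < R" "2*R + 2 \<le> n"
  shows "real n / (2 * real R) \<le> real ((n-1) div R)"
proof -
  define B where "B = (n-1) div R"
  have "n - 1 < R + B * R" unfolding B_def by (rule dividend_less_div_times[OF assms(1)])
  then have "n \<le> R + B * R" using assms by linarith
  then have "real n \<le> real (R + B * R)" by (simp only: of_nat_le_iff)
  then have a: "real n \<le> real R + real B * real R" by simp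
  have "real (2*R + 2) \<le> real n" using assms by (simp only: of_nat_le_iff)
  then have "2 * real R + 2 \<le> real n" by simp
  with a have "real n / 2 \<le> real B * real R" by linarith
  then show ?thesis using assms unfolding B_def[symmetric] by (simp add: field_simps)
qed

lemma aa_lower: "\<exists>c>0. \<exists>N. \<forall>n\<ge>N. c \<le> aa n"
proof -
  obtain R1 :: nat where R1: "R1 > 0" "\<And>n. ((n-1) div R1) * ((n-1) div 205) \<le> card (W n)"
    using W_lower by blast
  define c where "c = ln 2 / (4 * real R1 * 205)"
  have "c \<le> aa n" if n: "n \<ge> 2*R1 + 2 + 412" for n
  proof -
    define Br where "Br = (n-1) div R1"
    define Bc where "Bc = (n-1) div 205"
    have b1: "real n / (2 * real R1) \<le> real Br" unfolding Br_def by (rule div_real_lower) (use R1 n in auto)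
    have b2: "real n / (2 * real (205::nat)) \<le> real Bc" unfolding Bc_def by (rule div_real_lower) (use n in auto)
    have "real n / (2 * real R1) * (real n / (2 * 205)) \<le> real Br * real Bc"
      using b1 b2 by (intro mult_mono) auto
    also have "\<dots> \<le> real (card (W n))" using R1(2)[of n] unfolding Br_def Bc_def by (metis of_nat_le_iff of_nat_mult)
    finally have w: "real n * real n / (4 * real R1 * 205) \<le> real (card (W n))" by (simp add: field_simps)
    have "(2::real) ^ card (W n) \<le> real (card (PS n))" using count_lower[of n] by (metis of_nat_le_iff of_nat_numeral of_nat_power)
    then have "ln ((2::real) ^ card (W n)) \<le> ln (real (card (PS n)))" using card_PS_pos[of n] by (subst ln_le_cancel_iff) auto
    then have "real (card (W n)) * ln 2 \<le> ln (real (card (PS n)))" by (simp add: ln_realpow)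
    then have "real n * real n / (4 * real R1 * 205) * ln 2 \<le> ln (real (card (PS n)))"
      using w by (meson ln_ge_zero mult_right_mono one_le_numeral order_trans)
    then have "c * (real n)^2 \<le> ln (real (card (PS n)))" unfolding c_def by (simp add: field_simps power2_eq_square)
    then show ?thesis unfolding aa_def pc_PS using n by (simp add: field_simps)
  qed
  moreover have "c > 0" unfolding c_def using R1 by simp
  ultimately show ?thesis by blast
qed

lemma aa_converges: "\<exists>H>0. aa \<longlonglongrightarrow> H"
proof -
  define L where "L = Inf (aa ` {1..})"
  have bdd: "bdd_below (aa ` {1..})" using aa_nonneg by (intro bdd_belowI[of _ 0]) auto
  have ne: "aa ` {1..} \<noteq> {}" by auto
  have lim: "aa \<longlonglongrightarrow> L"
  proof (rule order_tendstoI)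
    fix y assume y: "y < L"
    have "\<forall>n\<ge>1. y < aa n"
    proof (intro allI impI)
      fix n :: nat assume "1 \<le> n"
      then have "L \<le> aa n" unfolding L_def by (intro cInf_lower bdd) auto
      then show "y < aa n" using y by linarith
    qed
    then show "eventually (\<lambda>n. y < aa n) sequentially" by (auto simp: eventually_sequentially)
  next
    fix y assume y: "L < y"
    then obtain m where m: "m \<in> {1..}" "aa m < y" unfolding L_def using cInf_less_iff[OF ne bdd] by auto
    have "(\<lambda>n. (1 + real m / real n)^2 * aa m) \<longlonglongrightarrow> (1 + 0)^2 * aa m"
      by (intro tendsto_intros lim_const_over_n)
    then have "eventually (\<lambda>n. (1 + real m / real n)^2 * aa m < y) sequentially"
      using m(2) by (intro order_tendstoD(2)) auto
    moreover have "eventually (\<lambda>n. aa n \<le> (1 + real m / real n)^2 * aa m) sequentially"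
      unfolding eventually_sequentially using aa_upper m(1) by (intro exI[of _ 1]) auto
    ultimately show "eventually (\<lambda>n. aa n < y) sequentially"
      by eventually_elim auto
  qed
  obtain c N where c: "c > 0" "\<forall>n\<ge>N. c \<le> aa n" using aa_lower by blast
  have "c \<le> L" by (rule LIMSEQ_le_const[OF lim]) (use c in blast)
  then show ?thesis using lim c by (intro exI[of _ L]) auto
qed

theorem mainTheorem1:
  shows "(\<exists>f. is_tiling KC f) \<and>
         (\<exists>H > 0. (\<lambda>n. ln (real (pattern_count KC n)) / (real n)^2) \<longlonglongrightarrow> H)"
  using canon_tiling aa_converges unfolding aa_def by blast


end
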